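(* Let $v,w\ge 1$ be integers and $e$ a real number, and let $P(v,w,e)=e^3-(v+w)e^2+2vwe-v^2w^2$. If $P(v,w,e)\le 0$, then $P(v+1,w,e+1)\le 0$. *)

theory Defs
  imports Complex_Main
begin

definition P :: "real \<Rightarrow> real \<Rightarrow> real \<Rightarrow> real" where
  "P v w e = e ^ 3 - (v + w) * e ^ 2 + 2 * v * w * e - v ^ 2 * w ^ 2"

end

theory Submission
  imports Defs
begin

lemma main_real:
  fixes v w e :: real
  assumes v1: "v \<ge> 1" and w1: "w \<ge> 1" and hP: "P v w e \<le> 0"
  shows "P (v + 1) w (e + 1) \<le> 0"
proof -
  define u where "u = e - v"
  define A where "A = u + w - w^2"
  define B where "B = 2 * u^2"
  define C where "C = (u - w) * u^2"
  have e: "e = v + u" unfolding u_def by simp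
  have id: "\<And>x. P x w (x + u) = A * x^2 + B * x + C"
    unfolding P_def A_def B_def C_def by (simp add: power2_eq_square power3_eq_cube algebra_simps)
  have P0: "A * v^2 + B * v + C \<le> 0" using hP id[of v] e by simp
  have goal: "A * (v+1)^2 + B * (v+1) + C \<le> 0"
  proof (cases "u \<le> 0")
    case True
    have "w - w^2 \<le> 0" using w1 by (simp add: power2_eq_square mult_le_cancel_left1)
    hence "A \<le> u" unfolding A_def by simp
    hence "A * (v+1)^2 \<le> u * (v+1)^2" by (simp add: mult_right_mono)
    moreover have "u * (v+1)^2 + B * (v+1) + C = u * (v+1+u)^2 - w * u^2"
      unfolding B_def C_def by (simp add: power2_eq_square algebra_simps)
    moreover have "u * (v+1+u)^2 \<le> 0" using True by (simp add: mult_nonpos_nonneg)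
    moreover have "w * u^2 \<ge> 0" using w1 by simp
    ultimately show ?thesis by linarith
  next
    case False
    hence u0: "u > 0" by simp
    show ?thesis
    proof (cases "u \<le> w - 1")
      case True
      have "w^2 - w - u \<ge> (w-1)^2" using True by (simp add: power2_eq_square algebra_simps)
      moreover have "(w-1)^2 \<ge> u^2" using True u0 by (simp add: power_mono)
      ultimately have h1: "w^2 - w - u \<ge> u^2" by linarith
      have h2: "w - u \<ge> 1" using True by simp
      have "(w^2 - w - u) * (w - u) \<ge> u^2 * 1"
        using h1 h2 zero_le_power2[of u] by (metis mult_mono order_trans zero_le_one)
      hence "(u + w - w^2) * (u - w) \<ge> u^2" by (simp add: algebra_simps)
      hence disc: "4*A*C - B^2 \<ge> 0"
        unfolding A_def B_def C_def
      proof -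
        assume a: "(u + w - w^2) * (u - w) \<ge> u^2"
        have "4 * (u + w - w\<^sup>2) * ((u - w) * u\<^sup>2) - (2 * u\<^sup>2)\<^sup>2 = 4*u^2 * ((u + w - w^2) * (u - w) - u^2)"
          by (simp add: power2_eq_square algebra_simps)
        also have "\<dots> \<ge> 0" using a by simp
        finally show "4 * (u + w - w\<^sup>2) * ((u - w) * u\<^sup>2) - (2 * u\<^sup>2)\<^sup>2 \<ge> 0" .
      qed
      have Aneg: "A < 0"
      proof -
        have "A = -(w^2 - w - u)" unfolding A_def by simp
        moreover have "u^2 > 0" using u0 by simp
        ultimately show ?thesis using h1 by linarith
      qed
      define x where "x = v + 1"
      have "4*A*(A * x^2 + B * x + C) = (2*A*x+B)^2 + (4*A*C - B^2)"
        by (simp add: power2_eq_square algebra_simps)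
      also have "\<dots> \<ge> 0" using disc by simp
      finally have "4*A*(A * x^2 + B * x + C) \<ge> 0" .
      hence "0 \<le> (4*A)*(A * x^2 + B * x + C)" by (simp add: mult.assoc)
      hence "A * x^2 + B * x + C \<le> 0" using Aneg
        by (auto simp: zero_le_mult_iff)
      thus ?thesis unfolding x_def .
    next
      case False
      have P1: "A + B + C > 0"
      proof -
        have "A + B + C = (1 + u - w) * (u^2 + u + w)"
          unfolding A_def B_def C_def by (simp add: power2_eq_square algebra_simps)
        moreover have "1 + u - w > 0" using False by simp
        moreover have "u^2 + u + w > 0" using u0 w1 zero_le_power2[of u] by linarith
        ultimately show ?thesis by simp
      qed
      have vgt: "v > 1" using P0 P1 v1 by (cases "v = 1") auto
      have "A * v^2 + B * v + C - (A + B + C) = (v - 1) * (A * (v+1) + B)"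
        by (simp add: power2_eq_square algebra_simps)
      hence "(v - 1) * (A * (v+1) + B) < 0" using P0 P1 by linarith
      hence h: "A * (v+1) + B < 0" using vgt by (simp add: mult_less_0_iff)
      have Bpos: "B \<ge> 0" unfolding B_def by simp
      have Aneg: "A < 0"
      proof (rule ccontr)
        assume "\<not> A < 0"
        hence "A * (v+1) \<ge> 0" using vgt by simp
        thus False using h Bpos by linarith
      qed
      have "A * v < 0" using Aneg vgt by (simp add: mult_neg_pos)
      have "A * (v+1)^2 + B * (v+1) + C = (A * v^2 + B * v + C) + (A * (v+1) + B) + A * v"
        by (simp add: power2_eq_square algebra_simps)
      thus ?thesis using P0 h \<open>A * v < 0\<close> by linarith
    qed
  qed
  have "P (v+1) w (e+1) = A * (v+1)^2 + B * (v+1) + C"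
    using id[of "v+1"] e by (simp add: algebra_simps)
  thus ?thesis using goal by simp
qed

theorem lemma4p7:
  fixes v w :: int and e :: real
  assumes "v \<ge> 1" and "w \<ge> 1"
    and "P (of_int v) (of_int w) e \<le> 0"
  shows "P (of_int v + 1) (of_int w) (e + 1) \<le> 0"
  using main_real assms by simp

end
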